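(* Let $P$ be a probability distribution of a random variable $\xi$, let $\mathcal X\subseteq\mathbb R^d$, and let $\lambda>0$. Assume: (i) for every $\xi$, $x\mapsto \ell(x;\xi)$ is $G$-Lipschitz continuous and $L$-smooth on $\mathcal X$; (ii) $\psi:\mathbb R\to[0,+\infty]$ is convex, $\psi(1)=0$, $\psi(t)=+\infty$ for all $t<0$, and $\psi^*(t)=\sup_{s}(st-\psi(s))$ is $M$-smooth. Define $$\mathcal L(x,\eta)=\mathbb E_{\xi\sim P}\Big[\lambda\psi^*\Big(\frac{\ell(x;\xi)-\eta}{\lambda}\Big)+\eta\Big],\quad \Psi(x)=\min_{\eta\in\mathbb R}\mathcal L(x,\eta),\quad \widehat{\mathcal L}(x,\eta)=\mathcal L(x,G\eta).$$ If for some $(x,\eta)$ we have $\|\nabla_x\mathcal L(x,\eta)\|+G|\nabla_\eta\mathcal L(x,\eta)|\le\epsilon$, then $\|\nabla\Psi(x)\|\le\epsilon$. Furthermore, if $\|\nabla\widehat{\mathcal L}(x,\eta)\|\le\epsilon/\sqrt2$, then $\|\nabla\Psi(x)\|\le\epsilon$.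
   Context: $\Psi$ is differentiable under these assumptions. A point $x$ with $\|\nabla\Psi(x)\|\le\epsilon$ is called an $\epsilon$-stationary point of $\Psi$. Norms are Euclidean. *)

theory Defs
  imports "HOL-Analysis.Analysis" "HOL-Probability.Probability"
begin

text \<open>Gradient of a function on a real inner product space (meaningful where differentiable).\<close>
definition grad :: "('a::real_inner \<Rightarrow> real) \<Rightarrow> 'a \<Rightarrow> 'a" where
  "grad f x = (SOME g. (f has_derivative (\<lambda>h. g \<bullet> h)) (at x))"

definition smooth_on :: "real \<Rightarrow> ('a::real_inner \<Rightarrow> real) \<Rightarrow> 'a set \<Rightarrow> bool" where
  "smooth_on L f S \<longleftrightarrow> (\<forall>x\<in>S. f differentiable (at x)) \<and>
     (\<forall>x\<in>S. \<forall>y\<in>S. norm (grad f x - grad f y) \<le> L * norm (x - y))"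

definition ereal_convex :: "(real \<Rightarrow> ereal) \<Rightarrow> bool" where
  "ereal_convex f \<longleftrightarrow> (\<forall>s t a. 0 \<le> a \<and> a \<le> 1 \<longrightarrow>
      f (a * s + (1 - a) * t) \<le> ereal a * f s + ereal (1 - a) * f t)"

definition conj_ereal :: "(real \<Rightarrow> ereal) \<Rightarrow> real \<Rightarrow> ereal" where
  "conj_ereal \<psi> t = (SUP s. ereal (s * t) - \<psi> s)"

text \<open>Real-valued version of the conjugate (used when it is finite).\<close>
definition conj_real :: "(real \<Rightarrow> ereal) \<Rightarrow> real \<Rightarrow> real" where
  "conj_real \<psi> t = real_of_ereal (conj_ereal \<psi> t)"

definition Lobj :: "'b measure \<Rightarrow> ('a \<Rightarrow> 'b \<Rightarrow> real) \<Rightarrow> (real \<Rightarrow> ereal) \<Rightarrow> real \<Rightarrow> 'a \<Rightarrow> real \<Rightarrow> real" where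
  "Lobj P l \<psi> lam x \<eta> = (\<integral>\<xi>. lam * conj_real \<psi> ((l x \<xi> - \<eta>) / lam) + \<eta> \<partial>P)"

definition PsiF :: "'b measure \<Rightarrow> ('a \<Rightarrow> 'b \<Rightarrow> real) \<Rightarrow> (real \<Rightarrow> ereal) \<Rightarrow> real \<Rightarrow> 'a \<Rightarrow> real" where
  "PsiF P l \<psi> lam x = (INF \<eta>. Lobj P l \<psi> lam x \<eta>)"

end

theory Submission imports Defs begin
lemma riesz_lin:
  fixes D :: "'a::euclidean_space \<Rightarrow> real"
  assumes "bounded_linear D"
  shows "D h = (\<Sum>b\<in>Basis. D b *\<^sub>R b) \<bullet> h"
proof -
  interpret bounded_linear D by fact
  have "D h = D (\<Sum>b\<in>Basis. (h \<bullet> b) *\<^sub>R b)" by (simp only: euclidean_representation)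
  also have "\<dots> = (\<Sum>b\<in>Basis. (h \<bullet> b) * D b)" by (simp add: sum scale)
  also have "\<dots> = (\<Sum>b\<in>Basis. D b *\<^sub>R b) \<bullet> h"
    by (subst inner_commute) (simp add: inner_sum_right mult.commute)
  finally show ?thesis .
qed
lemma grad_has_derivative:
  fixes f :: "'a::euclidean_space \<Rightarrow> real"
  assumes "f differentiable (at x)"
  shows "(f has_derivative (\<lambda>h. grad f x \<bullet> h)) (at x)"
proof -
  from assms obtain D where D: "(f has_derivative D) (at x)" by (auto simp: differentiable_def)
  have bl: "bounded_linear D" using D by (rule has_derivative_bounded_linear)
  have eq: "D = (\<lambda>h. (\<Sum>b\<in>Basis. D b *\<^sub>R b) \<bullet> h)" by (rule ext) (rule riesz_lin[OF bl])
  have ex: "\<exists>g. (f has_derivative (\<lambda>h. g \<bullet> h)) (at x)"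
    by (rule exI[of _ "\<Sum>b\<in>Basis. D b *\<^sub>R b"]) (rule subst[OF eq, of "\<lambda>D. (f has_derivative D) (at x)", OF D])
  show ?thesis unfolding grad_def by (rule someI_ex[OF ex])
qed
lemma grad_unique:
  fixes f :: "'a::euclidean_space \<Rightarrow> real"
  assumes "(f has_derivative (\<lambda>h. g \<bullet> h)) (at x)"
  shows "grad f x = g"
proof -
  have d: "f differentiable (at x)" using assms by (auto simp: differentiable_def)
  have "(\<lambda>h. grad f x \<bullet> h) = (\<lambda>h. g \<bullet> h)"
    using has_derivative_unique[OF grad_has_derivative[OF d] assms] .
  then have "grad f x \<bullet> (grad f x - g) = g \<bullet> (grad f x - g)" by (rule fun_cong)
  then have "(grad f x - g) \<bullet> (grad f x - g) = 0" by (simp add: inner_diff_left)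
  then show ?thesis by simp
qed

lemma grad_real:
  fixes f :: "real \<Rightarrow> real"
  assumes "f differentiable (at x)"
  shows "(f has_real_derivative grad f x) (at x)"
proof -
  have e: "(\<lambda>h. grad f x \<bullet> h) = (*) (grad f x)" by (simp add: fun_eq_iff)
  show ?thesis using grad_has_derivative[OF assms] unfolding has_field_derivative_def e .
qed

lemma grad_real_unique:
  fixes f :: "real \<Rightarrow> real"
  assumes "(f has_real_derivative D) (at x)"
  shows "grad f x = D"
proof -
  have e: "(\<lambda>h. D \<bullet> h) = (*) D" by (simp add: fun_eq_iff)
  show ?thesis using assms unfolding has_field_derivative_def e[symmetric] by (rule grad_unique)
qed
lemma quad_deriv:
  fixes f :: "'a::real_normed_vector \<Rightarrow> real"
  assumes bl: "bounded_linear D" and r: "r > 0"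
    and q: "\<And>h. norm h < r \<Longrightarrow> \<bar>f (x + h) - f x - D h\<bar> \<le> K * (norm h)\<^sup>2"
  shows "(f has_derivative D) (at x)"
proof -
  have "\<forall>e>0. \<exists>d>0. \<forall>y\<in>UNIV. norm (y - x) < d \<longrightarrow> norm (f y - f x - D (y - x)) \<le> e * norm (y - x)"
  proof (intro allI impI)
    fix e :: real assume e: "e > 0"
    define d where "d = min r (e / (\<bar>K\<bar> + 1))"
    have d: "d > 0" using e r by (simp add: d_def)
    show "\<exists>d>0. \<forall>y\<in>UNIV. norm (y - x) < d \<longrightarrow> norm (f y - f x - D (y - x)) \<le> e * norm (y - x)"
    proof (intro exI[of _ d] conjI ballI impI d)
      fix y assume y: "norm (y - x) < d"
      have "\<bar>f y - f x - D (y - x)\<bar> \<le> K * (norm (y - x))\<^sup>2"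
        using q[of "y - x"] y by (simp add: d_def)
      also have "\<dots> \<le> e * norm (y - x)"
      proof -
        have "(\<bar>K\<bar> + 1) * norm (y - x) \<le> (\<bar>K\<bar> + 1) * (e / (\<bar>K\<bar> + 1))"
          using y by (intro mult_left_mono) (auto simp: d_def)
        also have "\<dots> = e" by simp
        finally have "K * norm (y - x) \<le> e"
          by (smt (verit, best) mult_right_mono norm_ge_zero)
        then have "(K * norm (y - x)) * norm (y - x) \<le> e * norm (y - x)"
          by (rule mult_right_mono) simp
        then show ?thesis by (simp add: power2_eq_square mult.assoc)
      qed
      finally show "norm (f y - f x - D (y - x)) \<le> e * norm (y - x)" by simp
    qed
  qed
  then show ?thesis using bl by (simp add: has_derivative_within_alt)
qed

lemma deriv_dir:
  fixes f :: "'a::real_inner \<Rightarrow> real"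
  assumes "(f has_derivative (\<lambda>h. g \<bullet> h)) (at x)"
  shows "((\<lambda>t. (f (x + t *\<^sub>R v) - f x) / t) \<longlongrightarrow> g \<bullet> v) (at_right 0)"
proof -
  have l: "((\<lambda>t. x + t *\<^sub>R v) has_derivative (\<lambda>t. t *\<^sub>R v)) (at 0)"
    by (auto intro!: derivative_eq_intros)
  have f0: "(f has_derivative (\<lambda>h. g \<bullet> h)) (at (x + 0 *\<^sub>R v))" using assms by simp
  have "((\<lambda>t. f (x + t *\<^sub>R v)) has_derivative (\<lambda>t. g \<bullet> (t *\<^sub>R v))) (at 0)"
    by (rule has_derivative_compose[OF l f0])
  moreover have "(\<lambda>t. g \<bullet> (t *\<^sub>R v)) = (*) (g \<bullet> v)" by (simp add: fun_eq_iff)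
  ultimately have "((\<lambda>t. f (x + t *\<^sub>R v)) has_field_derivative g \<bullet> v) (at 0)"
    by (simp add: has_field_derivative_def)
  then have "((\<lambda>t. (f (x + t *\<^sub>R v) - f x) / t) \<longlongrightarrow> g \<bullet> v) (at 0)"
    by (simp add: has_field_derivative_iff)
  then show ?thesis by (rule tendsto_mono[rotated]) (simp add: at_within_le_at)
qed

lemma Inf_unbdd:
  fixes S T :: "real set"
  assumes "\<not> bdd_below S" "\<not> bdd_below T"
  shows "Inf S = Inf T"
proof -
  have nS: "\<not> bdd_above (uminus ` S)" using assms(1) bdd_above_uminus_image[of "\<lambda>x. x" S] by simp
  have nT: "\<not> bdd_above (uminus ` T)" using assms(2) bdd_above_uminus_image[of "\<lambda>x. x" T] by simp
  have "(\<lambda>z. \<forall>x\<in>uminus ` S. x \<le> z) = (\<lambda>z::real. False)"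
    using nS by (auto simp: bdd_above_def fun_eq_iff)
  moreover have "(\<lambda>z. \<forall>x\<in>uminus ` T. x \<le> z) = (\<lambda>z::real. False)"
    using nT by (auto simp: bdd_above_def fun_eq_iff)
  ultimately show ?thesis unfolding Inf_real_def Sup_real_def by simp
qed

lemma near_min_aux:
  fixes f g :: "real \<Rightarrow> real"
  assumes der: "\<And>e. (f has_real_derivative g e) (at e)" and mg: "mono g"
    and cg: "continuous_on UNIV g"
    and B: "\<And>e. B \<le> f e" and ep: "\<epsilon> > 0" and g0: "g e0 > \<epsilon>"
  shows "\<exists>e. f e \<le> f e0 \<and> \<bar>g e\<bar> \<le> \<epsilon>"
proof -
  have "\<exists>e1\<le>e0. g e1 \<le> \<epsilon>"
  proof (rule ccontr)
    assume "\<not> (\<exists>e1\<le>e0. g e1 \<le> \<epsilon>)"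
    then have gt: "\<And>e. e \<le> e0 \<Longrightarrow> g e > \<epsilon>" by force
    define s where "s = (f e0 - B + 1) / \<epsilon>"
    have s: "s > 0" using B[of e0] ep by (simp add: s_def)
    have "\<exists>z. e0 - s < z \<and> z < e0 \<and> f e0 - f (e0 - s) = (e0 - (e0 - s)) * g z"
      by (rule MVT2) (use s der in auto)
    then obtain z where z: "e0 - s < z" "z < e0" "f e0 - f (e0 - s) = s * g z" by auto
    have "s * \<epsilon> < s * g z" using gt[of z] z s by simp
    also have "s * \<epsilon> = f e0 - B + 1" using ep by (simp add: s_def)
    finally have "f (e0 - s) < B" using z(3) by linarith
    with B show False by (meson not_le)
  qed
  then obtain e1 where e1: "e1 \<le> e0" "g e1 \<le> \<epsilon>" by blast
  have "\<exists>e2. e1 \<le> e2 \<and> e2 \<le> e0 \<and> g e2 = \<epsilon>"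
    by (rule IVT') (use e1 g0 continuous_on_subset[OF cg] in auto)
  then obtain e2 where e2: "e1 \<le> e2" "e2 \<le> e0" "g e2 = \<epsilon>" by blast
  have "f e2 \<le> f e0"
  proof (cases "e2 = e0")
    case False
    then have lt: "e2 < e0" using e2 by simp
    have "\<exists>z. e2 < z \<and> z < e0 \<and> f e0 - f e2 = (e0 - e2) * g z"
      by (rule MVT2) (use lt der in auto)
    then obtain z where z: "e2 < z" "z < e0" "f e0 - f e2 = (e0 - e2) * g z" by auto
    have "g z \<ge> \<epsilon>" using monoD[OF mg, of e2 z] z e2 by simp
    then have "(e0 - e2) * g z \<ge> 0" using lt ep by simp
    then show ?thesis using z(3) by simp
  qed simp
  then show ?thesis using e2 ep by auto
qed

lemma near_min:
  fixes f g :: "real \<Rightarrow> real"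
  assumes der: "\<And>e. (f has_real_derivative g e) (at e)" and mg: "mono g"
    and cg: "continuous_on UNIV g"
    and bdd: "bdd_below (range f)" and ep: "\<epsilon> > 0"
  shows "\<exists>e. f e \<le> Inf (range f) + \<epsilon>\<^sup>2 \<and> \<bar>g e\<bar> \<le> \<epsilon>"
proof -
  obtain B where B: "\<And>e. B \<le> f e" using bdd by (auto simp: bdd_below_def)
  have "Inf (range f) < Inf (range f) + \<epsilon>\<^sup>2" using ep by simp
  then have "\<exists>x\<in>range f. x < Inf (range f) + \<epsilon>\<^sup>2" by (intro cInf_lessD) auto
  then obtain e0 where e0: "f e0 < Inf (range f) + \<epsilon>\<^sup>2" by auto
  consider "\<bar>g e0\<bar> \<le> \<epsilon>" | "g e0 > \<epsilon>" | "g e0 < - \<epsilon>" by linarith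
  then show ?thesis
  proof cases
    case 1 then show ?thesis using e0 by (intro exI[of _ e0]) auto
  next
    case 2
    obtain e where "f e \<le> f e0" "\<bar>g e\<bar> \<le> \<epsilon>" using near_min_aux[OF der mg cg B ep 2] by blast
    then show ?thesis using e0 by (intro exI[of _ e]) auto
  next
    case 3
    have der2: "((\<lambda>e. f (- e)) has_real_derivative - g (- e)) (at e)" for e
      using der[of "- e"] by (simp add: DERIV_mirror)
    have mg2: "mono (\<lambda>e. - g (- e))"
      by (rule monoI) (simp add: monoD[OF mg])
    have cg2: "continuous_on UNIV (\<lambda>e. - g (- e))"
      by (intro continuous_intros continuous_on_compose2[OF cg]) auto
    have "(\<lambda>e. - g (- e)) (- e0) > \<epsilon>" using 3 by simp
    from near_min_aux[OF der2 mg2 cg2 _ ep this] B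
    obtain e where "f (- e) \<le> f (- (- e0))" "\<bar>- g (- e)\<bar> \<le> \<epsilon>" by blast
    then show ?thesis using e0 by (intro exI[of _ "- e"]) auto
  qed
qed

locale conjf =
  fixes \<psi> :: "real \<Rightarrow> ereal" and M :: real
  assumes psi_nonneg: "\<forall>t. \<psi> t \<ge> 0"
    and psi_one: "\<psi> 1 = 0"
    and psi_neg: "\<forall>t<0. \<psi> t = \<infinity>"
    and conj_finite: "\<forall>t. conj_ereal \<psi> t < \<infinity>"
    and conj_smooth: "smooth_on M (conj_real \<psi>) UNIV"
begin

abbreviation "c \<equiv> conj_real \<psi>"
abbreviation "c' \<equiv> grad (conj_real \<psi>)"

lemma conj_ge: "ereal t \<le> conj_ereal \<psi> t"
  unfolding conj_ereal_def by (rule SUP_upper2[of 1]) (simp_all add: psi_one)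

lemma conj_eq: "conj_ereal \<psi> t = ereal (c t)"
proof -
  have "\<bar>conj_ereal \<psi> t\<bar> \<noteq> \<infinity>"
    using conj_ge[of t] conj_finite by (cases "conj_ereal \<psi> t") auto
  then show ?thesis unfolding conj_real_def by (simp add: ereal_real')
qed

lemma c_ge: "t \<le> c t"
  using conj_ge[of t] by (simp add: conj_eq)

lemma term_le: "\<psi> s = ereal p \<Longrightarrow> s * t - p \<le> c t"
proof -
  assume p: "\<psi> s = ereal p"
  have "ereal (s * t) - \<psi> s \<le> conj_ereal \<psi> t"
    unfolding conj_ereal_def by (rule SUP_upper) simp
  then show ?thesis by (simp add: p conj_eq)
qed

lemma c_le:
  assumes "\<And>s p. \<psi> s = ereal p \<Longrightarrow> s * t - p \<le> B"
  shows "c t \<le> B"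
proof -
  have "conj_ereal \<psi> t \<le> ereal B"
    unfolding conj_ereal_def
  proof (rule SUP_least)
    fix s
    show "ereal (s * t) - \<psi> s \<le> ereal B"
    proof (cases "\<psi> s")
      case (real p)
      then show ?thesis using assms[of s p] by simp
    next
      case PInf
      then show ?thesis by simp
    next
      case MInf
      then show ?thesis using psi_nonneg[rule_format, of s] by simp
    qed
  qed
  then show ?thesis by (simp add: conj_eq)
qed

lemma c_mono: "mono c"
proof (rule monoI)
  fix t1 t2 :: real assume le: "t1 \<le> t2"
  show "c t1 \<le> c t2"
  proof (rule c_le)
    fix s p assume p: "\<psi> s = ereal p"
    have "s \<ge> 0"
    proof (rule ccontr)
      assume "\<not> 0 \<le> s"
      then have "\<psi> s = \<infinity>" using psi_neg by simp
      with p show False by simp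
    qed
    then have "s * t1 - p \<le> s * t2 - p" using le by (simp add: mult_left_mono)
    also have "\<dots> \<le> c t2" by (rule term_le[OF p])
    finally show "s * t1 - p \<le> c t2" .
  qed
qed

lemma c_convex: "convex_on UNIV c"
  unfolding convex_on_def
proof (intro conjI ballI allI impI)
  fix x y u v :: real assume uv: "0 \<le> u" "0 \<le> v" "u + v = 1"
  show "c (u *\<^sub>R x + v *\<^sub>R y) \<le> u * c x + v * c y"
  proof (rule c_le)
    fix s p assume p: "\<psi> s = ereal p"
    have "s * (u *\<^sub>R x + v *\<^sub>R y) - p = u * (s * x - p) + v * (s * y - p)"
      using uv by (simp add: algebra_simps) (metis distrib_left mult.right_neutral)
    also have "\<dots> \<le> u * c x + v * c y"
      using term_le[OF p, of x] term_le[OF p, of y] uv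
      by (intro add_mono mult_left_mono) auto
    finally show "s * (u *\<^sub>R x + v *\<^sub>R y) - p \<le> u * c x + v * c y" .
  qed
qed simp

lemma c_deriv: "(c has_real_derivative c' t) (at t)"
  using conj_smooth by (intro grad_real) (simp add: smooth_on_def)

lemma c'_lip: "\<bar>c' s - c' t\<bar> \<le> M * \<bar>s - t\<bar>"
  using conj_smooth by (simp add: smooth_on_def)

lemma c_tangent: "c b - c a \<ge> c' a * (b - a)"
  by (rule convex_on_imp_above_tangent[OF c_convex]) (auto intro: has_field_derivative_at_within c_deriv)

lemma c'_mono: "mono c'"
proof (rule monoI)
  fix a b :: real assume ab: "a \<le> b"
  show "c' a \<le> c' b"
  proof (cases "a = b")
    case False
    then have "a < b" using ab by simp
    have "(c' b - c' a) * (b - a) \<ge> 0"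
      using c_tangent[where a=a and b=b] c_tangent[where a=b and b=a] by (simp add: algebra_simps)
    then show ?thesis using \<open>a < b\<close> by (simp add: zero_le_mult_iff)
  qed simp
qed

lemma c'_nonneg: "c' t \<ge> 0"
  using c_tangent[where a=t and b="t - 1"] monoD[OF c_mono, of "t - 1" t] by simp

lemma c'_le: "c' t \<le> c (t + 1) - c t"
  using c_tangent[where a=t and b="t + 1"] by simp

lemma c_taylor: "\<bar>c (a + h) - c a - c' a * h\<bar> \<le> M * h\<^sup>2"
proof -
  consider "h = 0" | "h > 0" | "h < 0" by linarith
  then show ?thesis
  proof cases
    case 1
    then show ?thesis using c'_lip[of 0 0] by simp
  next
    case 2
    have "\<exists>z. a < z \<and> z < a + h \<and> c (a + h) - c a = (a + h - a) * c' z"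
      by (rule MVT2) (use 2 c_deriv in auto)
    then obtain z where z: "a < z" "z < a + h" "c (a + h) - c a = (a + h - a) * c' z" by blast
    have "\<bar>c (a + h) - c a - c' a * h\<bar> = \<bar>c' z - c' a\<bar> * \<bar>h\<bar>"
      using z(3) by (simp add: abs_mult[symmetric] algebra_simps)
    also have "\<dots> \<le> (M * \<bar>z - a\<bar>) * \<bar>h\<bar>" by (intro mult_right_mono c'_lip) simp
    also have "\<dots> \<le> M * h\<^sup>2"
    proof -
      have M0: "M \<ge> 0" using c'_lip[of "a+1" a] abs_ge_zero[of "c' (a+1) - c' a"] by simp
      have "M * \<bar>z - a\<bar> \<le> M * \<bar>h\<bar>" using z 2 M0 by (intro mult_left_mono) auto
      then have "(M * \<bar>z - a\<bar>) * \<bar>h\<bar> \<le> (M * \<bar>h\<bar>) * \<bar>h\<bar>" by (rule mult_right_mono) simp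
      then show ?thesis by (simp only: mult.assoc abs_mult_self_eq power2_eq_square)
    qed
    finally show ?thesis .
  next
    case 3
    have "\<exists>z. a + h < z \<and> z < a \<and> c a - c (a + h) = (a - (a + h)) * c' z"
      by (rule MVT2) (use 3 c_deriv in auto)
    then obtain z where z: "a + h < z" "z < a" "c a - c (a + h) = (a - (a + h)) * c' z" by blast
    have "\<bar>c (a + h) - c a - c' a * h\<bar> = \<bar>c' z - c' a\<bar> * \<bar>h\<bar>"
      using z(3) by (simp add: abs_mult[symmetric] algebra_simps)
    also have "\<dots> \<le> (M * \<bar>z - a\<bar>) * \<bar>h\<bar>" by (intro mult_right_mono c'_lip) simp
    also have "\<dots> \<le> M * h\<^sup>2"
    proof -
      have M0: "M \<ge> 0" using c'_lip[of "a+1" a] abs_ge_zero[of "c' (a+1) - c' a"] by simp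
      have "M * \<bar>z - a\<bar> \<le> M * \<bar>h\<bar>" using z 3 M0 by (intro mult_left_mono) auto
      then have "(M * \<bar>z - a\<bar>) * \<bar>h\<bar> \<le> (M * \<bar>h\<bar>) * \<bar>h\<bar>" by (rule mult_right_mono) simp
      then show ?thesis by (simp only: mult.assoc abs_mult_self_eq power2_eq_square)
    qed
    finally show ?thesis .
  qed
qed

end

locale dro = conjf \<psi> Mc + prob_space P for \<psi> Mc and P :: "'b measure" +
  fixes X :: "'a::euclidean_space set" and l :: "'a \<Rightarrow> 'b \<Rightarrow> real" and lam G :: real
  assumes opX: "open X" and lam: "lam > 0"
    and lip: "\<forall>\<xi>. G-lipschitz_on X (\<lambda>y. l y \<xi>)"
    and meas: "\<forall>y\<in>X. (\<lambda>\<xi>. l y \<xi>) \<in> borel_measurable P"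
    and integ: "\<forall>y\<in>X. \<forall>e. integrable P (\<lambda>\<xi>. conj_real \<psi> ((l y \<xi> - e) / lam))"
begin

abbreviation "LL y e \<equiv> Lobj P l \<psi> lam y e"
definition "DD y e = (\<integral>\<xi>. c' ((l y \<xi> - e) / lam) \<partial>P)"

lemma G0: "G \<ge> 0"
  using lip by (auto simp: lipschitz_on_def)

lemma lipl: "y \<in> X \<Longrightarrow> z \<in> X \<Longrightarrow> \<bar>l y \<xi> - l z \<xi>\<bar> \<le> G * norm (y - z)"
  using lip by (auto simp: lipschitz_on_def dist_real_def dist_norm)

lemma meas_u: "y \<in> X \<Longrightarrow> (\<lambda>\<xi>. (l y \<xi> - e) / lam) \<in> borel_measurable P"
  using meas by (intro borel_measurable_divide borel_measurable_diff) auto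

lemma meas_c': "y \<in> X \<Longrightarrow> (\<lambda>\<xi>. c' ((l y \<xi> - e) / lam)) \<in> borel_measurable P"
  by (rule measurable_compose[OF meas_u borel_measurable_mono[OF c'_mono]])

lemma int_c: "y \<in> X \<Longrightarrow> integrable P (\<lambda>\<xi>. c ((l y \<xi> - e) / lam))"
  using integ by auto

lemma int_c': "y \<in> X \<Longrightarrow> integrable P (\<lambda>\<xi>. c' ((l y \<xi> - e) / lam))"
proof -
  assume y: "y \<in> X"
  have "integrable P (\<lambda>\<xi>. c ((l y \<xi> - (e - lam)) / lam) - c ((l y \<xi> - e) / lam))"
    using int_c[OF y] by (intro Bochner_Integration.integrable_diff) auto
  moreover have "\<And>\<xi>. (l y \<xi> - (e - lam)) / lam = (l y \<xi> - e) / lam + 1"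
    using lam by (simp add: field_simps)
  ultimately have i: "integrable P (\<lambda>\<xi>. c ((l y \<xi> - e) / lam + 1) - c ((l y \<xi> - e) / lam))"
    by simp
  show ?thesis
  proof (rule Bochner_Integration.integrable_bound[OF i meas_c'[OF y]])
    show "AE \<xi> in P. norm (c' ((l y \<xi> - e) / lam))
        \<le> norm (c ((l y \<xi> - e) / lam + 1) - c ((l y \<xi> - e) / lam))"
      using c'_le c'_nonneg by (intro AE_I2) (smt (verit) real_norm_def)
  qed
qed

lemma L_eq: "y \<in> X \<Longrightarrow> LL y e = lam * (\<integral>\<xi>. c ((l y \<xi> - e) / lam) \<partial>P) + e"
proof -
  assume y: "y \<in> X"
  have "LL y e = (\<integral>\<xi>. lam * c ((l y \<xi> - e) / lam) \<partial>P) + (\<integral>\<xi>. e \<partial>P)"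
    unfolding Lobj_def using int_c[OF y, of e] by (intro Bochner_Integration.integral_add Bochner_Integration.integrable_mult_right) auto
  also have "(\<integral>\<xi>. e \<partial>P) = e" using prob_space by (simp add: measure_def)
  finally show ?thesis by simp
qed

lemma abs_int_le:
  fixes f :: "'b \<Rightarrow> real"
  assumes "integrable P f" "\<And>\<xi>. \<bar>f \<xi>\<bar> \<le> B"
  shows "\<bar>integral\<^sup>L P f\<bar> \<le> B"
proof -
  have "\<bar>integral\<^sup>L P f\<bar> \<le> (\<integral>\<xi>. \<bar>f \<xi>\<bar> \<partial>P)"
    using Bochner_Integration.integral_abs_bound[of P f] by simp
  also have "\<dots> \<le> (\<integral>\<xi>. B \<partial>P)"
    using assms by (intro Bochner_Integration.integral_mono) auto
  also have "\<dots> = B" using prob_space by simp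
  finally show ?thesis .
qed


lemma meas_l: "y \<in> X \<Longrightarrow> (\<lambda>\<xi>. l y \<xi>) \<in> borel_measurable P"
  using meas by auto

lemma int_lin: 
  fixes F1 F2 H :: "'b \<Rightarrow> real"
  assumes "integrable P F1" "integrable P F2" "integrable P H"
  shows "integrable P (\<lambda>\<xi>. F1 \<xi> - F2 \<xi> - H \<xi> * k)"
    and "(\<integral>\<xi>. F1 \<xi> - F2 \<xi> - H \<xi> * k \<partial>P) = integral\<^sup>L P F1 - integral\<^sup>L P F2 - integral\<^sup>L P H * k"
proof -
  show i: "integrable P (\<lambda>\<xi>. F1 \<xi> - F2 \<xi> - H \<xi> * k)"
    using assms by (intro Bochner_Integration.integrable_diff Bochner_Integration.integrable_mult_left) auto
  have "(\<integral>\<xi>. F1 \<xi> - F2 \<xi> - H \<xi> * k \<partial>P) = (\<integral>\<xi>. F1 \<xi> - F2 \<xi> \<partial>P) - (\<integral>\<xi>. H \<xi> * k \<partial>P)"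
    using assms by (intro Bochner_Integration.integral_diff Bochner_Integration.integrable_diff Bochner_Integration.integrable_mult_left) auto
  also have "\<dots> = integral\<^sup>L P F1 - integral\<^sup>L P F2 - integral\<^sup>L P H * k"
    using assms by simp
  finally show "(\<integral>\<xi>. F1 \<xi> - F2 \<xi> - H \<xi> * k \<partial>P) = integral\<^sup>L P F1 - integral\<^sup>L P F2 - integral\<^sup>L P H * k" .
qed

lemma L_eta_quad:
  assumes x: "x \<in> X"
  shows "\<bar>LL x (e + s) - LL x e - (1 - DD x e) * s\<bar> \<le> (Mc / lam) * s\<^sup>2"
proof -
  define b where "b \<xi> = (l x \<xi> - e) / lam" for \<xi>
  define h where "h = - s / lam"
  have ab: "(l x \<xi> - (e + s)) / lam = b \<xi> + h" for \<xi>
    unfolding b_def h_def using lam by (simp add: field_simps)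
  have i1: "integrable P (\<lambda>\<xi>. c (b \<xi> + h))" using int_c[OF x, of "e + s"] by (simp add: ab)
  have i2: "integrable P (\<lambda>\<xi>. c (b \<xi>))" using int_c[OF x, of e] by (simp add: b_def)
  have i3: "integrable P (\<lambda>\<xi>. c' (b \<xi>))" using int_c'[OF x, of e] by (simp add: b_def)
  have "LL x (e + s) - LL x e - (1 - DD x e) * s
      = lam * ((\<integral>\<xi>. c (b \<xi> + h) \<partial>P) - (\<integral>\<xi>. c (b \<xi>) \<partial>P) - (\<integral>\<xi>. c' (b \<xi>) \<partial>P) * h)"
    using lam unfolding L_eq[OF x] DD_def h_def ab by (simp add: b_def field_simps)
  also have "\<dots> = lam * (\<integral>\<xi>. c (b \<xi> + h) - c (b \<xi>) - c' (b \<xi>) * h \<partial>P)"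
    using int_lin(2)[OF i1 i2 i3] by simp
  finally have eq: "LL x (e + s) - LL x e - (1 - DD x e) * s = lam * (\<integral>\<xi>. c (b \<xi> + h) - c (b \<xi>) - c' (b \<xi>) * h \<partial>P)" .
  have "\<bar>\<integral>\<xi>. c (b \<xi> + h) - c (b \<xi>) - c' (b \<xi>) * h \<partial>P\<bar> \<le> Mc * h\<^sup>2"
    by (rule abs_int_le[OF int_lin(1)[OF i1 i2 i3]]) (rule c_taylor)
  then have "\<bar>LL x (e + s) - LL x e - (1 - DD x e) * s\<bar> \<le> lam * (Mc * h\<^sup>2)"
    unfolding eq using lam by (simp add: abs_mult)
  also have "\<dots> = (Mc / lam) * s\<^sup>2"
    using lam by (simp add: h_def power2_eq_square field_simps)
  finally show ?thesis .
qed

lemma L_eta_deriv: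
  assumes x: "x \<in> X"
  shows "((\<lambda>e. LL x e) has_real_derivative (1 - DD x e)) (at e)"
  unfolding has_field_derivative_def
proof (rule quad_deriv[where r=1 and K="Mc / lam"])
  show "bounded_linear ((*) (1 - DD x e))" by (rule bounded_linear_mult_right)
  fix s :: real
  show "\<bar>LL x (e + s) - LL x e - (1 - DD x e) * s\<bar> \<le> Mc / lam * (norm s)\<^sup>2"
    using L_eta_quad[OF x] by simp
qed simp


definition "II x y e = (\<integral>\<xi>. c' ((l x \<xi> - e) / lam) * (l y \<xi> - l x \<xi>) \<partial>P)"

lemma abs_int_le2:
  fixes F g :: "'b \<Rightarrow> real"
  assumes "integrable P F" "integrable P g" "\<And>\<xi>. \<bar>F \<xi>\<bar> \<le> g \<xi>"
  shows "\<bar>integral\<^sup>L P F\<bar> \<le> integral\<^sup>L P g"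
proof -
  have "\<bar>integral\<^sup>L P F\<bar> \<le> (\<integral>\<xi>. \<bar>F \<xi>\<bar> \<partial>P)"
    using Bochner_Integration.integral_abs_bound[of P F] by simp
  also have "\<dots> \<le> integral\<^sup>L P g"
    using assms by (intro Bochner_Integration.integral_mono) auto
  finally show ?thesis .
qed

lemma int_H:
  assumes x: "x \<in> X" and y: "y \<in> X"
  shows "integrable P (\<lambda>\<xi>. c' ((l x \<xi> - e) / lam) * (l y \<xi> - l x \<xi>))"
proof (rule Bochner_Integration.integrable_bound)
  show "integrable P (\<lambda>\<xi>. c' ((l x \<xi> - e) / lam) * (G * norm (y - x)))"
    using int_c'[OF x] by (intro Bochner_Integration.integrable_mult_left) auto
  show "(\<lambda>\<xi>. c' ((l x \<xi> - e) / lam) * (l y \<xi> - l x \<xi>)) \<in> borel_measurable P"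
    using meas_c'[OF x] meas_l[OF x] meas_l[OF y] by (intro borel_measurable_times borel_measurable_diff) auto
  show "AE \<xi> in P. norm (c' ((l x \<xi> - e) / lam) * (l y \<xi> - l x \<xi>))
      \<le> norm (c' ((l x \<xi> - e) / lam) * (G * norm (y - x)))"
  proof (intro AE_I2)
    fix \<xi>
    have "\<bar>c' ((l x \<xi> - e) / lam) * (l y \<xi> - l x \<xi>)\<bar> = c' ((l x \<xi> - e) / lam) * \<bar>l y \<xi> - l x \<xi>\<bar>"
      using c'_nonneg by (simp add: abs_mult)
    also have "\<dots> \<le> c' ((l x \<xi> - e) / lam) * (G * norm (y - x))"
      using c'_nonneg lipl[OF y x] by (intro mult_left_mono) auto
    also have "\<dots> = \<bar>c' ((l x \<xi> - e) / lam) * (G * norm (y - x))\<bar>"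
      using c'_nonneg G0 by (simp add: abs_mult)
    finally show "norm (c' ((l x \<xi> - e) / lam) * (l y \<xi> - l x \<xi>))
      \<le> norm (c' ((l x \<xi> - e) / lam) * (G * norm (y - x)))" by simp
  qed
qed

lemma E2:
  assumes x: "x \<in> X" and y: "y \<in> X"
  shows "\<bar>LL y e - LL x e - II x y e\<bar> \<le> Mc * G\<^sup>2 * (norm (y - x))\<^sup>2 / lam"
proof -
  define b where "b \<xi> = (l x \<xi> - e) / lam" for \<xi>
  define d where "d \<xi> = (l y \<xi> - l x \<xi>) / lam" for \<xi>
  define r where "r = norm (y - x)"
  have bd: "(l y \<xi> - e) / lam = b \<xi> + d \<xi>" for \<xi>
    unfolding b_def d_def using lam by (simp add: field_simps)
  have i1: "integrable P (\<lambda>\<xi>. c (b \<xi> + d \<xi>))" using int_c[OF y, of e] by (simp add: bd)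
  have i2: "integrable P (\<lambda>\<xi>. c (b \<xi>))" using int_c[OF x, of e] by (simp add: b_def)
  have i3': "integrable P (\<lambda>\<xi>. c' (b \<xi>) * (l y \<xi> - l x \<xi>))" using int_H[OF x y, of e] by (simp add: b_def)
  have i3: "integrable P (\<lambda>\<xi>. c' (b \<xi>) * d \<xi>)"
  proof -
    have "integrable P (\<lambda>\<xi>. c' (b \<xi>) * (l y \<xi> - l x \<xi>) * (1 / lam))"
      using i3' by (rule Bochner_Integration.integrable_mult_left)
    then show ?thesis by (simp add: d_def)
  qed
  have II_eq: "II x y e = lam * (\<integral>\<xi>. c' (b \<xi>) * d \<xi> \<partial>P)"
  proof -
    have pw: "c' ((l x \<xi> - e) / lam) * (l y \<xi> - l x \<xi>) = lam * (c' (b \<xi>) * d \<xi>)" for \<xi>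
      unfolding b_def d_def using lam by simp
    have "II x y e = (\<integral>\<xi>. lam * (c' (b \<xi>) * d \<xi>) \<partial>P)"
      unfolding II_def pw ..
    then show ?thesis by simp
  qed
  have "LL y e - LL x e - II x y e
      = lam * ((\<integral>\<xi>. c (b \<xi> + d \<xi>) \<partial>P) - (\<integral>\<xi>. c (b \<xi>) \<partial>P) - (\<integral>\<xi>. c' (b \<xi>) * d \<xi> \<partial>P))"
    unfolding L_eq[OF x] L_eq[OF y] II_eq bd by (simp add: b_def algebra_simps)
  also have "\<dots> = lam * (\<integral>\<xi>. c (b \<xi> + d \<xi>) - c (b \<xi>) - c' (b \<xi>) * d \<xi> \<partial>P)"
    using i1 i2 i3 by simp
  finally have eq: "LL y e - LL x e - II x y e = lam * (\<integral>\<xi>. c (b \<xi> + d \<xi>) - c (b \<xi>) - c' (b \<xi>) * d \<xi> \<partial>P)" .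
  have dB: "\<bar>d \<xi>\<bar> \<le> G * r / lam" for \<xi>
    unfolding d_def r_def using lipl[OF y x, of \<xi>] lam by (simp add: abs_div divide_right_mono)
  have "\<bar>\<integral>\<xi>. c (b \<xi> + d \<xi>) - c (b \<xi>) - c' (b \<xi>) * d \<xi> \<partial>P\<bar> \<le> Mc * (G * r / lam)\<^sup>2"
  proof (rule abs_int_le)
    show "integrable P (\<lambda>\<xi>. c (b \<xi> + d \<xi>) - c (b \<xi>) - c' (b \<xi>) * d \<xi>)"
      using i1 i2 i3 by auto
    fix \<xi>
    have M0: "Mc \<ge> 0" using c'_lip[of 1 0] abs_ge_zero[of "c' 1 - c' 0"] by simp
    have "(d \<xi>)\<^sup>2 \<le> (G * r / lam)\<^sup>2"
      using dB[of \<xi>] by (metis abs_ge_zero order_trans power2_abs power_mono)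
    then have "Mc * (d \<xi>)\<^sup>2 \<le> Mc * (G * r / lam)\<^sup>2" using M0 by (rule mult_left_mono)
    with c_taylor[of "b \<xi>" "d \<xi>"]
    show "\<bar>c (b \<xi> + d \<xi>) - c (b \<xi>) - c' (b \<xi>) * d \<xi>\<bar> \<le> Mc * (G * r / lam)\<^sup>2" by linarith
  qed
  then have "\<bar>LL y e - LL x e - II x y e\<bar> \<le> lam * (Mc * (G * r / lam)\<^sup>2)"
    unfolding eq using lam by (simp add: abs_mult)
  also have "\<dots> = Mc * G\<^sup>2 * r\<^sup>2 / lam"
    using lam by (simp add: power2_eq_square field_simps)
  finally show ?thesis by (simp add: r_def)
qed

lemma E3:
  assumes x: "x \<in> X" and y: "y \<in> X"
  shows "\<bar>II x y e - II x y \<eta>\<bar> \<le> G * norm (y - x) * \<bar>DD x e - DD x \<eta>\<bar>"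
proof -
  define r where "r = norm (y - x)"
  have ie: "integrable P (\<lambda>\<xi>. c' ((l x \<xi> - e) / lam) * (l y \<xi> - l x \<xi>))" by (rule int_H[OF x y])
  have i\<eta>: "integrable P (\<lambda>\<xi>. c' ((l x \<xi> - \<eta>) / lam) * (l y \<xi> - l x \<xi>))" by (rule int_H[OF x y])
  have diff: "II x y e - II x y \<eta> = (\<integral>\<xi>. (c' ((l x \<xi> - e) / lam) - c' ((l x \<xi> - \<eta>) / lam)) * (l y \<xi> - l x \<xi>) \<partial>P)"
    unfolding II_def using ie i\<eta> by (simp add: left_diff_distrib)
  have iF: "integrable P (\<lambda>\<xi>. (c' ((l x \<xi> - e) / lam) - c' ((l x \<xi> - \<eta>) / lam)) * (l y \<xi> - l x \<xi>))"
    using ie i\<eta> by (simp add: left_diff_distrib)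
  have ce: "integrable P (\<lambda>\<xi>. c' ((l x \<xi> - e) / lam))" by (rule int_c'[OF x])
  have c\<eta>: "integrable P (\<lambda>\<xi>. c' ((l x \<xi> - \<eta>) / lam))" by (rule int_c'[OF x])
  have gr: "0 \<le> G * r" using G0 by (simp add: r_def)
  have bnd: "\<bar>(p - q) * (l y \<xi> - l x \<xi>)\<bar> \<le> \<bar>p - q\<bar> * (G * r)" for p q \<xi>
    unfolding r_def using lipl[OF y x, of \<xi>] by (simp add: abs_mult mult_left_mono)
  show ?thesis
  proof (cases "e \<le> \<eta>")
    case True
    have mono: "c' ((l x \<xi> - \<eta>) / lam) \<le> c' ((l x \<xi> - e) / lam)" for \<xi>
      using True lam by (intro monoD[OF c'_mono] divide_right_mono) auto
    have "\<bar>II x y e - II x y \<eta>\<bar> \<le> (\<integral>\<xi>. (c' ((l x \<xi> - e) / lam) - c' ((l x \<xi> - \<eta>) / lam)) * (G * r) \<partial>P)"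
      unfolding diff
    proof (rule abs_int_le2[OF iF])
      show "integrable P (\<lambda>\<xi>. (c' ((l x \<xi> - e) / lam) - c' ((l x \<xi> - \<eta>) / lam)) * (G * r))"
        using ce c\<eta> by auto
      fix \<xi> show "\<bar>(c' ((l x \<xi> - e) / lam) - c' ((l x \<xi> - \<eta>) / lam)) * (l y \<xi> - l x \<xi>)\<bar>
          \<le> (c' ((l x \<xi> - e) / lam) - c' ((l x \<xi> - \<eta>) / lam)) * (G * r)"
        using bnd[of "c' ((l x \<xi> - e) / lam)" "c' ((l x \<xi> - \<eta>) / lam)" \<xi>] mono[of \<xi>] by simp
    qed
    also have "\<dots> = G * r * (DD x e - DD x \<eta>)"
      unfolding DD_def using ce c\<eta> by (simp add: mult.commute)
    also have "\<dots> \<le> G * r * \<bar>DD x e - DD x \<eta>\<bar>"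
      by (rule mult_left_mono[OF abs_ge_self gr])
    finally show ?thesis by (simp add: r_def)
  next
    case False
    have mono: "c' ((l x \<xi> - e) / lam) \<le> c' ((l x \<xi> - \<eta>) / lam)" for \<xi>
      using False lam by (intro monoD[OF c'_mono] divide_right_mono) auto
    have "\<bar>II x y e - II x y \<eta>\<bar> \<le> (\<integral>\<xi>. (c' ((l x \<xi> - \<eta>) / lam) - c' ((l x \<xi> - e) / lam)) * (G * r) \<partial>P)"
      unfolding diff
    proof (rule abs_int_le2[OF iF])
      show "integrable P (\<lambda>\<xi>. (c' ((l x \<xi> - \<eta>) / lam) - c' ((l x \<xi> - e) / lam)) * (G * r))"
        using ce c\<eta> by auto
      fix \<xi> show "\<bar>(c' ((l x \<xi> - e) / lam) - c' ((l x \<xi> - \<eta>) / lam)) * (l y \<xi> - l x \<xi>)\<bar>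
          \<le> (c' ((l x \<xi> - \<eta>) / lam) - c' ((l x \<xi> - e) / lam)) * (G * r)"
        using bnd[of "c' ((l x \<xi> - e) / lam)" "c' ((l x \<xi> - \<eta>) / lam)" \<xi>] mono[of \<xi>] by simp
    qed
    also have "\<dots> = G * r * (DD x \<eta> - DD x e)"
      unfolding DD_def using ce c\<eta> by (simp add: mult.commute)
    also have "\<dots> \<le> G * r * \<bar>DD x \<eta> - DD x e\<bar>"
      by (rule mult_left_mono[OF abs_ge_self gr])
    also have "\<dots> = G * r * \<bar>DD x e - DD x \<eta>\<bar>" by (simp add: abs_minus_commute)
    finally show ?thesis by (simp add: r_def)
  qed
qed

lemma shift_lower:
  assumes x: "x \<in> X" and y: "y \<in> X"
  shows "LL x (e + G * norm (y - x)) - G * norm (y - x) \<le> LL y e"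
proof -
  define r where "r = G * norm (y - x)"
  have "(\<integral>\<xi>. c ((l x \<xi> - (e + r)) / lam) \<partial>P) \<le> (\<integral>\<xi>. c ((l y \<xi> - e) / lam) \<partial>P)"
  proof (intro Bochner_Integration.integral_mono int_c x y)
    fix \<xi>
    have "l x \<xi> - r \<le> l y \<xi>" using lipl[OF y x, of \<xi>] by (simp add: r_def)
    then have "(l x \<xi> - (e + r)) / lam \<le> (l y \<xi> - e) / lam" using lam by (intro divide_right_mono) auto
    then show "c ((l x \<xi> - (e + r)) / lam) \<le> c ((l y \<xi> - e) / lam)" by (rule monoD[OF c_mono])
  qed
  then show ?thesis unfolding L_eq[OF x] L_eq[OF y] r_def[symmetric] using lam by simp
qed

lemma shift_upper:
  assumes x: "x \<in> X" and y: "y \<in> X"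
  shows "LL y e \<le> LL x (e - G * norm (y - x)) + G * norm (y - x)"
proof -
  define r where "r = G * norm (y - x)"
  have "(\<integral>\<xi>. c ((l y \<xi> - e) / lam) \<partial>P) \<le> (\<integral>\<xi>. c ((l x \<xi> - (e - r)) / lam) \<partial>P)"
  proof (intro Bochner_Integration.integral_mono int_c x y)
    fix \<xi>
    have "l y \<xi> \<le> l x \<xi> + r" using lipl[OF y x, of \<xi>] by (simp add: r_def)
    then have "(l y \<xi> - e) / lam \<le> (l x \<xi> - (e - r)) / lam" using lam by (intro divide_right_mono) auto
    then show "c ((l y \<xi> - e) / lam) \<le> c ((l x \<xi> - (e - r)) / lam)" by (rule monoD[OF c_mono])
  qed
  then show ?thesis unfolding L_eq[OF x] L_eq[OF y] r_def[symmetric] using lam by simp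
qed

lemma DD_antimono:
  assumes x: "x \<in> X" and "e \<le> e'"
  shows "DD x e' \<le> DD x e"
  unfolding DD_def
proof (intro Bochner_Integration.integral_mono int_c' x)
  fix \<xi> show "c' ((l x \<xi> - e') / lam) \<le> c' ((l x \<xi> - e) / lam)"
    using assms lam by (intro monoD[OF c'_mono] divide_right_mono) auto
qed

lemma DD_lip:
  assumes x: "x \<in> X"
  shows "\<bar>DD x e - DD x e'\<bar> \<le> Mc / lam * \<bar>e - e'\<bar>"
proof -
  have "DD x e - DD x e' = (\<integral>\<xi>. c' ((l x \<xi> - e) / lam) - c' ((l x \<xi> - e') / lam) \<partial>P)"
    unfolding DD_def using int_c'[OF x] by simp
  also have "\<bar>\<dots>\<bar> \<le> Mc / lam * \<bar>e - e'\<bar>"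
  proof (rule abs_int_le)
    show "integrable P (\<lambda>\<xi>. c' ((l x \<xi> - e) / lam) - c' ((l x \<xi> - e') / lam))"
      using int_c'[OF x] by auto
    fix \<xi>
    have "\<bar>c' ((l x \<xi> - e) / lam) - c' ((l x \<xi> - e') / lam)\<bar> \<le> Mc * \<bar>(l x \<xi> - e) / lam - (l x \<xi> - e') / lam\<bar>"
      by (rule c'_lip)
    also have "\<bar>(l x \<xi> - e) / lam - (l x \<xi> - e') / lam\<bar> = \<bar>e - e'\<bar> / lam"
    proof -
      have "(l x \<xi> - e) / lam - (l x \<xi> - e') / lam = (e' - e) / lam" by (simp add: diff_divide_distrib)
      then show ?thesis using lam by (simp add: abs_div abs_minus_commute)
    qed
    finally show "\<bar>c' ((l x \<xi> - e) / lam) - c' ((l x \<xi> - e') / lam)\<bar> \<le> Mc / lam * \<bar>e - e'\<bar>" by simp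
  qed
  finally show ?thesis .
qed


abbreviation "Psi \<equiv> PsiF P l \<psi> lam"

lemma Psi_eq: "Psi y = Inf (range (LL y))"
  by (simp add: PsiF_def)

lemma Mc0: "Mc \<ge> 0" using c'_lip[of 1 0] abs_ge_zero[of "c' 1 - c' 0"] by simp

lemma key_ineq:
  assumes x: "x \<in> X" and y: "y \<in> X" and bdd: "bdd_below (range (LL x))"
  shows "Psi y - Psi x \<le> LL y \<eta> - LL x \<eta> + G * norm (y - x) * \<bar>1 - DD x \<eta>\<bar>
           + (G + 2 * Mc * G\<^sup>2 / lam + 1) * (norm (y - x))\<^sup>2"
proof (cases "y = x")
  case True then show ?thesis by simp
next
  case False
  define r where "r = norm (y - x)"
  have r: "r > 0" using False by (simp add: r_def)
  define g where "g e = 1 - DD x e" for e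
  have der: "(LL x has_real_derivative g e) (at e)" for e
    using L_eta_deriv[OF x, of e] by (simp add: g_def)
  have mg: "mono g"
    by (rule monoI) (simp add: g_def DD_antimono[OF x])
  have "(Mc / lam)-lipschitz_on UNIV g"
  proof (rule lipschitz_onI)
    show "0 \<le> Mc / lam" using Mc0 lam by simp
    fix a b :: real
    show "dist (g a) (g b) \<le> Mc / lam * dist a b"
      using DD_lip[OF x, of b a] by (simp add: g_def dist_real_def abs_minus_commute)
  qed
  then have cg: "continuous_on UNIV g" by (rule lipschitz_on_continuous_on)
  obtain e where e: "LL x e \<le> Inf (range (LL x)) + r\<^sup>2" "\<bar>g e\<bar> \<le> r"
    using near_min[OF der mg cg bdd r] by blast
  obtain B where B: "\<And>e. B \<le> LL x e" using bdd by (auto simp: bdd_below_def)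
  have bddy: "bdd_below (range (LL y))"
  proof (rule bdd_belowI2)
    fix e'
    show "B - G * norm (y - x) \<le> LL y e'"
      using shift_lower[OF x y, of e'] B[of "e' + G * norm (y - x)"] by simp
  qed
  have Py: "Psi y \<le> LL y e" unfolding Psi_eq by (rule cInf_lower[OF _ bddy]) simp
  have Px: "LL x e - r\<^sup>2 \<le> Psi x" unfolding Psi_eq using e(1) by simp
  have e2e: "LL y e - LL x e \<le> II x y e + Mc * G\<^sup>2 * r\<^sup>2 / lam"
    using E2[OF x y, of e] by (simp add: r_def)
  have e2\<eta>: "II x y \<eta> \<le> LL y \<eta> - LL x \<eta> + Mc * G\<^sup>2 * r\<^sup>2 / lam"
    using E2[OF x y, of \<eta>] by (simp add: r_def)
  have e3: "II x y e \<le> II x y \<eta> + G * r * \<bar>DD x e - DD x \<eta>\<bar>"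
    using E3[OF x y, of e \<eta>] by (simp add: r_def)
  have gr: "0 \<le> G * r" using G0 r by simp
  have "\<bar>DD x e - DD x \<eta>\<bar> \<le> \<bar>g \<eta>\<bar> + r"
    using e(2) by (simp add: g_def)
  then have "G * r * \<bar>DD x e - DD x \<eta>\<bar> \<le> G * r * (\<bar>g \<eta>\<bar> + r)"
    by (rule mult_left_mono[OF _ gr])
  also have "\<dots> = G * r * \<bar>g \<eta>\<bar> + G * r\<^sup>2"
    by (simp add: algebra_simps power2_eq_square)
  finally have e4: "G * r * \<bar>DD x e - DD x \<eta>\<bar> \<le> G * r * \<bar>g \<eta>\<bar> + G * r\<^sup>2" .
  have "(G + 2 * Mc * G\<^sup>2 / lam + 1) * r\<^sup>2 = G * r\<^sup>2 + 2 * (Mc * G\<^sup>2 * r\<^sup>2 / lam) + r\<^sup>2"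
    by (simp add: field_simps)
  then show ?thesis
    using Py Px e2e e2\<eta> e3 e4 unfolding r_def[symmetric] g_def by linarith
qed

lemma core:
  assumes x: "x \<in> X" and Pd: "Psi differentiable (at x)"
    and La: "((\<lambda>y. LL y \<eta>) has_derivative (\<lambda>h. a \<bullet> h)) (at x)"
  shows "norm (grad Psi x) \<le> norm a + G * \<bar>1 - DD x \<eta>\<bar>"
proof (cases "bdd_below (range (LL x))")
  case False
  have nb: "\<not> bdd_below (range (LL y))" if y: "y \<in> X" for y
  proof
    assume "bdd_below (range (LL y))"
    then obtain B where B: "\<And>e. B \<le> LL y e" by (auto simp: bdd_below_def)
    have "bdd_below (range (LL x))"
    proof (rule bdd_belowI2)
      fix e'
      show "B - G * norm (x - y) \<le> LL x e'"
        using shift_lower[OF y x, of e'] B[of "e' + G * norm (x - y)"] by simp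
    qed
    with False show False by simp
  qed
  have eq: "Psi x = Psi y" if "y \<in> X" for y
    unfolding Psi_eq by (rule Inf_unbdd[OF nb[OF x] nb[OF that]])
  have "(Psi has_derivative (\<lambda>h. 0)) (at x)"
    by (rule has_derivative_transform_within_open[OF has_derivative_const opX x eq])
  then have "(Psi has_derivative (\<lambda>h. (0::'a) \<bullet> h)) (at x)" by simp
  then have "grad Psi x = 0" by (rule grad_unique)
  then show ?thesis using G0 by simp
next
  case True
  define v where "v = grad Psi x"
  have Pder: "(Psi has_derivative (\<lambda>h. v \<bullet> h)) (at x)"
    unfolding v_def by (rule grad_has_derivative[OF Pd])
  define K where "K = G + 2 * Mc * G\<^sup>2 / lam + 1"
  define q where "q = \<bar>1 - DD x \<eta>\<bar>"
  show ?thesis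
  proof (cases "v = 0")
    case True
    then show ?thesis using G0 by (simp add: v_def)
  next
    case False
    then have nv: "norm v > 0" by simp
    obtain d where d: "d > 0" "ball x d \<subseteq> X" using opX x by (meson openE)
    have ev: "eventually (\<lambda>t. (Psi (x + t *\<^sub>R v) - Psi x) / t
        \<le> (LL (x + t *\<^sub>R v) \<eta> - LL x \<eta>) / t + G * norm v * q + K * t * (norm v)\<^sup>2) (at_right 0)"
      unfolding eventually_at_right_field
    proof (intro exI[of _ "d / norm v"] conjI allI impI)
      show "0 < d / norm v" using d nv by simp
      fix t :: real assume t: "0 < t" "t < d / norm v"
      have "norm (t *\<^sub>R v) < d" using t nv by (simp add: field_simps)
      then have y: "x + t *\<^sub>R v \<in> X" using d(2) by (auto simp: dist_norm)
      have n: "norm (x + t *\<^sub>R v - x) = t * norm v" using t by simp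
      have k: "Psi (x + t *\<^sub>R v) - Psi x \<le> LL (x + t *\<^sub>R v) \<eta> - LL x \<eta> + G * (t * norm v) * q + K * (t * norm v)\<^sup>2"
        using key_ineq[OF x y True, of \<eta>] unfolding n K_def q_def .
      have "(Psi (x + t *\<^sub>R v) - Psi x) / t \<le> (LL (x + t *\<^sub>R v) \<eta> - LL x \<eta> + G * (t * norm v) * q + K * (t * norm v)\<^sup>2) / t"
        using k t by (intro divide_right_mono) auto
      also have "\<dots> = (LL (x + t *\<^sub>R v) \<eta> - LL x \<eta>) / t + G * norm v * q + K * t * (norm v)\<^sup>2"
        using t by (simp add: field_simps power2_eq_square)
      finally show "(Psi (x + t *\<^sub>R v) - Psi x) / t
        \<le> (LL (x + t *\<^sub>R v) \<eta> - LL x \<eta>) / t + G * norm v * q + K * t * (norm v)\<^sup>2" .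
    qed
    have lim1: "((\<lambda>t. (Psi (x + t *\<^sub>R v) - Psi x) / t) \<longlongrightarrow> v \<bullet> v) (at_right 0)"
      by (rule deriv_dir[OF Pder])
    have lim2a: "((\<lambda>t. (LL (x + t *\<^sub>R v) \<eta> - LL x \<eta>) / t) \<longlongrightarrow> a \<bullet> v) (at_right 0)"
      using deriv_dir[OF La, of v] by simp
    have lim2b: "((\<lambda>t. K * t * (norm v)\<^sup>2) \<longlongrightarrow> K * 0 * (norm v)\<^sup>2) (at_right (0::real))"
      by (intro tendsto_intros)
    have lim2: "((\<lambda>t. (LL (x + t *\<^sub>R v) \<eta> - LL x \<eta>) / t + G * norm v * q + K * t * (norm v)\<^sup>2)
        \<longlongrightarrow> a \<bullet> v + G * norm v * q + K * 0 * (norm v)\<^sup>2) (at_right 0)"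
      by (intro tendsto_add lim2a lim2b tendsto_const)
    have "v \<bullet> v \<le> a \<bullet> v + G * norm v * q + K * 0 * (norm v)\<^sup>2"
      by (rule tendsto_le[OF _ lim2 lim1 ev]) simp
    then have "(norm v)\<^sup>2 \<le> a \<bullet> v + G * norm v * q" by (simp add: power2_norm_eq_inner)
    also have "\<dots> \<le> norm a * norm v + G * norm v * q"
      using norm_cauchy_schwarz[of a v] by simp
    finally have "norm v * norm v \<le> (norm a + G * q) * norm v"
      by (simp add: power2_eq_square algebra_simps)
    then have "norm v \<le> norm a + G * q" using nv by simp
    then show ?thesis by (simp add: v_def q_def)
  qed
qed

end
theorem theorem2p7:
  fixes P :: "'b measure" and X :: "'a::euclidean_space set"
    and l :: "'a \<Rightarrow> 'b \<Rightarrow> real" and \<psi> :: "real \<Rightarrow> ereal"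
    and lam G Ls M \<epsilon> :: real and x :: 'a and \<eta> :: real
  assumes "prob_space P"
    and "open X"
    and "lam > 0"
    and lip: "\<forall>\<xi>. G-lipschitz_on X (\<lambda>y. l y \<xi>)"
    and smooth: "\<forall>\<xi>. smooth_on Ls (\<lambda>y. l y \<xi>) X"
    and meas: "\<forall>y\<in>X. (\<lambda>\<xi>. l y \<xi>) \<in> borel_measurable P"
    and psi_nonneg: "\<forall>t. \<psi> t \<ge> 0"
    and psi_convex: "ereal_convex \<psi>"
    and psi_one: "\<psi> 1 = 0"
    and psi_neg: "\<forall>t<0. \<psi> t = \<infinity>"
    and conj_finite: "\<forall>t. conj_ereal \<psi> t < \<infinity>"
    and conj_smooth: "smooth_on M (conj_real \<psi>) UNIV"
    and integ: "\<forall>y\<in>X. \<forall>e. integrable P (\<lambda>\<xi>. conj_real \<psi> ((l y \<xi> - e) / lam))"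
    and "x \<in> X"
    and Psi_diff: "PsiF P l \<psi> lam differentiable (at x)"
  shows "((\<lambda>y. Lobj P l \<psi> lam y \<eta>) differentiable (at x) \<and>
          (\<lambda>e. Lobj P l \<psi> lam x e) differentiable (at \<eta>) \<and>
          norm (grad (\<lambda>y. Lobj P l \<psi> lam y \<eta>) x) + G * \<bar>grad (\<lambda>e. Lobj P l \<psi> lam x e) \<eta>\<bar> \<le> \<epsilon>
          \<longrightarrow> norm (grad (PsiF P l \<psi> lam) x) \<le> \<epsilon>)
       \<and> ((\<lambda>(y, e). Lobj P l \<psi> lam y (G * e)) differentiable (at (x, \<eta>)) \<and>
          norm (grad (\<lambda>(y, e). Lobj P l \<psi> lam y (G * e)) (x, \<eta>)) \<le> \<epsilon> / sqrt 2
          \<longrightarrow> norm (grad (PsiF P l \<psi> lam) x) \<le> \<epsilon>)"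
proof -
  interpret d: dro \<psi> M P X l lam G
    using assms unfolding dro_def dro_axioms_def conjf_def by auto
  have x: "x \<in> X" by fact
  have part1: "(\<lambda>y. Lobj P l \<psi> lam y \<eta>) differentiable (at x) \<and>
          (\<lambda>e. Lobj P l \<psi> lam x e) differentiable (at \<eta>) \<and>
          norm (grad (\<lambda>y. Lobj P l \<psi> lam y \<eta>) x) + G * \<bar>grad (\<lambda>e. Lobj P l \<psi> lam x e) \<eta>\<bar> \<le> \<epsilon>
          \<longrightarrow> norm (grad (PsiF P l \<psi> lam) x) \<le> \<epsilon>"
  proof (intro impI, elim conjE)
    assume d1: "(\<lambda>y. Lobj P l \<psi> lam y \<eta>) differentiable (at x)"
      and le: "norm (grad (\<lambda>y. Lobj P l \<psi> lam y \<eta>) x) + G * \<bar>grad (\<lambda>e. Lobj P l \<psi> lam x e) \<eta>\<bar> \<le> \<epsilon>"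
    have g: "grad (\<lambda>e. Lobj P l \<psi> lam x e) \<eta> = 1 - d.DD x \<eta>"
      by (rule grad_real_unique[OF d.L_eta_deriv[OF x]])
    have "norm (grad (PsiF P l \<psi> lam) x) \<le> norm (grad (\<lambda>y. Lobj P l \<psi> lam y \<eta>) x) + G * \<bar>1 - d.DD x \<eta>\<bar>"
      by (rule d.core[OF x Psi_diff grad_has_derivative[OF d1]])
    then show "norm (grad (PsiF P l \<psi> lam) x) \<le> \<epsilon>" using le g by simp
  qed
  have part2: "(\<lambda>(y, e). Lobj P l \<psi> lam y (G * e)) differentiable (at (x, \<eta>)) \<and>
          norm (grad (\<lambda>(y, e). Lobj P l \<psi> lam y (G * e)) (x, \<eta>)) \<le> \<epsilon> / sqrt 2
          \<longrightarrow> norm (grad (PsiF P l \<psi> lam) x) \<le> \<epsilon>"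
  proof (intro impI, elim conjE)
    define F where "F = (\<lambda>(y, e). Lobj P l \<psi> lam y (G * e))"
    assume f1: "(\<lambda>(y, e). Lobj P l \<psi> lam y (G * e)) differentiable (at (x, \<eta>))"
      and le2: "norm (grad (\<lambda>(y, e). Lobj P l \<psi> lam y (G * e)) (x, \<eta>)) \<le> \<epsilon> / sqrt 2"
    define w where "w = grad F (x, \<eta>)"
    have Fder: "(F has_derivative (\<lambda>h. w \<bullet> h)) (at (x, \<eta>))"
      unfolding w_def by (rule grad_has_derivative) (use f1 in \<open>simp add: F_def\<close>)
    have p1: "((\<lambda>y. (y, \<eta>)) has_derivative (\<lambda>h. (h, 0))) (at x)"
      by (auto intro!: derivative_eq_intros)
    have "((\<lambda>y. F (y, \<eta>)) has_derivative (\<lambda>h. w \<bullet> (h, 0))) (at x)"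
      using has_derivative_compose[OF p1, of F] Fder by simp
    moreover have "(\<lambda>h. w \<bullet> (h, 0)) = (\<lambda>h. fst w \<bullet> h)"
      by (simp add: fun_eq_iff inner_prod_def)
    ultimately have dy: "((\<lambda>y. Lobj P l \<psi> lam y (G * \<eta>)) has_derivative (\<lambda>h. fst w \<bullet> h)) (at x)"
      by (simp add: F_def)
    have p2: "((\<lambda>e. (x, e)) has_derivative (\<lambda>k. (0, k))) (at \<eta>)"
      by (auto intro!: derivative_eq_intros)
    have "((\<lambda>e. F (x, e)) has_derivative (\<lambda>k. w \<bullet> (0, k))) (at \<eta>)"
      using has_derivative_compose[OF p2, of F] Fder by simp
    moreover have "(\<lambda>k. w \<bullet> (0, k)) = (*) (snd w)"
      by (simp add: fun_eq_iff inner_prod_def)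
    ultimately have "((\<lambda>e. Lobj P l \<psi> lam x (G * e)) has_real_derivative snd w) (at \<eta>)"
      by (simp add: F_def has_field_derivative_def)
    then have gw: "grad (\<lambda>e. Lobj P l \<psi> lam x (G * e)) \<eta> = snd w"
      by (rule grad_real_unique)
    have "((\<lambda>e. Lobj P l \<psi> lam x (G * e)) has_real_derivative (1 - d.DD x (G * \<eta>)) * G) (at \<eta>)"
      by (rule DERIV_chain2[OF d.L_eta_deriv[OF x]]) (auto intro!: derivative_eq_intros)
    then have "grad (\<lambda>e. Lobj P l \<psi> lam x (G * e)) \<eta> = (1 - d.DD x (G * \<eta>)) * G"
      by (rule grad_real_unique)
    with gw have sw: "snd w = (1 - d.DD x (G * \<eta>)) * G" by simp
    have "norm (grad (PsiF P l \<psi> lam) x) \<le> norm (fst w) + G * \<bar>1 - d.DD x (G * \<eta>)\<bar>"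
      by (rule d.core[OF x Psi_diff dy])
    also have "G * \<bar>1 - d.DD x (G * \<eta>)\<bar> = \<bar>snd w\<bar>"
      using d.G0 by (simp add: sw abs_mult)
    also have "norm (fst w) + \<bar>snd w\<bar> \<le> sqrt 2 * norm w"
    proof -
      have nw: "norm w = sqrt ((norm (fst w))\<^sup>2 + (snd w)\<^sup>2)"
        by (metis norm_Pair prod.collapse real_norm_def power2_abs)
      have "(norm (fst w) + \<bar>snd w\<bar>)\<^sup>2 \<le> 2 * ((norm (fst w))\<^sup>2 + (snd w)\<^sup>2)"
        using sum_squares_bound[of "norm (fst w)" "\<bar>snd w\<bar>"]
        by (simp add: power2_sum)
      then have "norm (fst w) + \<bar>snd w\<bar> \<le> sqrt (2 * ((norm (fst w))\<^sup>2 + (snd w)\<^sup>2))"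
        by (rule real_le_rsqrt)
      moreover have "sqrt (2 * ((norm (fst w))\<^sup>2 + (snd w)\<^sup>2)) = sqrt 2 * sqrt ((norm (fst w))\<^sup>2 + (snd w)\<^sup>2)"
        by (rule real_sqrt_mult)
      ultimately show ?thesis by (simp only: nw)
    qed
    also have "\<dots> \<le> sqrt 2 * (\<epsilon> / sqrt 2)"
      using le2 by (intro mult_left_mono) (simp_all add: w_def F_def)
    also have "\<dots> = \<epsilon>" by simp
    finally show "norm (grad (PsiF P l \<psi> lam) x) \<le> \<epsilon>" by simp
  qed
  show ?thesis using part1 part2 by blast
qed

end
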